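(* Let $\mathbb F\subseteq\mathbb D$ be finite and let $(h,i)\in\mathbb F$ be $\mathbb F$-admissible. Then $|\Phi_h^{(i)}(\mathbb F)|=|\mathbb F|+1$ and $\mathrm{lh}(\Phi_h^{(i)}(\mathbb F))=\mathrm{lh}(\mathbb F)$.
   Context: Dyadic intervals: $\Delta_k^{(j)}:=[\frac{j-1}{2^k},\frac{j}{2^k})$ for $k\ge0$. Dyadic tree $\mathbb D:=\{(k,j):k\ge1;\ j=1,\dots,2^{k-1}\}$. Branches: $\mathbb B(t):=\{(k,j)\in\mathbb D:t\in\Delta_{k-1}^{(j)}\}$ for $t\in[0,1)$; local height $\mathrm{lh}(\mathbb F):=\max_{t\in[0,1)}|\mathbb F\cap\mathbb B(t)|$. An index $(h,i)\in\mathbb F$ is $\mathbb F$-admissible if neither $(h+1,2i-1)$ nor $(h+1,2i)$ belongs to $\mathbb F$. The fork is $\mathbb F_h^{(i)}:=\{(h,i),(h+1,2i-1),(h+1,2i)\}$. For $(k,j)\in\mathbb D$ define $j^\ast$ by: $j^\ast=j+2^{k-h-2}$ if $\Delta_{k-1}^{(j)}\subseteq\Delta_{h+1}^{(4i-2)}$; $j^\ast=j-2^{k-h-2}$ if $\Delta_{k-1}^{(j)}\subseteq\Delta_{h+1}^{(4i-1)}$; $j^\ast=j$ otherwise (equivalently $\chi_k^{(j)}\circ\phi_h^{(i)}=\chi_k^{(j^\ast)}$ for $(k,j)\notin\mathbb F_h^{(i)}$, where $\phi_h^{(i)}$ is the map of $[0,1)$ interchanging $\Delta_{h+1}^{(4i-2)}$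 and $\Delta_{h+1}^{(4i-1)}$ by translation and $\chi_k^{(j)}$ are the $L_2$-normalized Haar functions, $\chi_k^{(j)}=\pm2^{(k-1)/2}$ on $\Delta_k^{(2j-1)}$ resp. $\Delta_k^{(2j)}$). Then $\Phi_h^{(i)}(\mathbb F):=\{(h+1,2i-1),(h+1,2i)\}\cup\{(k,j^\ast):(k,j)\in\mathbb F\setminus\mathbb F_h^{(i)}\}$. *)

theory Defs
  imports Complex_Main
begin

definition dint :: "nat \<Rightarrow> nat \<Rightarrow> real set" where
  "dint k j = {(real j - 1) / 2 ^ k ..< real j / 2 ^ k}"

definition dtree :: "(nat \<times> nat) set" where
  "dtree = {(k, j). 1 \<le> k \<and> 1 \<le> j \<and> j \<le> 2 ^ (k - 1)}"

definition branch :: "real \<Rightarrow> (nat \<times> nat) set" where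
  "branch t = {(k, j) \<in> dtree. t \<in> dint (k - 1) j}"

definition lh :: "(nat \<times> nat) set \<Rightarrow> nat" where
  "lh F = Max ((\<lambda>t. card (F \<inter> branch t)) ` {0..<1})"

definition admissible :: "(nat \<times> nat) set \<Rightarrow> nat \<Rightarrow> nat \<Rightarrow> bool" where
  "admissible F h i \<longleftrightarrow> (h, i) \<in> F \<and> (h + 1, 2 * i - 1) \<notin> F \<and> (h + 1, 2 * i) \<notin> F"

definition fork :: "nat \<Rightarrow> nat \<Rightarrow> (nat \<times> nat) set" where
  "fork h i = {(h, i), (h + 1, 2 * i - 1), (h + 1, 2 * i)}"

definition jstar :: "nat \<Rightarrow> nat \<Rightarrow> nat \<Rightarrow> nat \<Rightarrow> nat" where
  "jstar h i k j =
     (if dint (k - 1) j \<subseteq> dint (h + 1) (4 * i - 2) then j + 2 ^ (k - h - 2)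
      else if dint (k - 1) j \<subseteq> dint (h + 1) (4 * i - 1) then j - 2 ^ (k - h - 2)
      else j)"

definition Phi :: "nat \<Rightarrow> nat \<Rightarrow> (nat \<times> nat) set \<Rightarrow> (nat \<times> nat) set" where
  "Phi h i F = {(h + 1, 2 * i - 1), (h + 1, 2 * i)}
              \<union> {(k, jstar h i k j) | k j. (k, j) \<in> F - fork h i}"

end

theory Submission
  imports Defs
begin

definition idx :: "nat \<Rightarrow> real \<Rightarrow> int" where
  "idx a t = \<lfloor>t * 2 ^ a\<rfloor>"

lemma mem_dint: "t \<in> dint a j \<longleftrightarrow> idx a t = int j - 1"
proof -
  have p: "(0::real) < 2 ^ a" by simp
  have "t \<in> dint a j \<longleftrightarrow> real j - 1 \<le> t * 2 ^ a \<and> t * 2 ^ a < real j"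
    unfolding dint_def using p by (simp add: divide_le_eq less_divide_eq pos_divide_le_eq pos_less_divide_eq)
  also have "\<dots> \<longleftrightarrow> idx a t = int j - 1"
    unfolding idx_def by (simp add: floor_eq_iff)
  finally show ?thesis .
qed

lemma idx_div: assumes "b \<le> a" shows "idx b t = idx a t div 2 ^ (a - b)"
proof -
  have e: "(2::real) ^ a = 2 ^ b * 2 ^ (a - b)"
    using assms by (simp add: power_add[symmetric])
  have "t * 2 ^ b = (t * 2 ^ a) / real_of_int (2 ^ (a - b))"
    by (simp add: e)
  then show ?thesis unfolding idx_def
    by (metis floor_divide_real_eq_div zero_le_numeral zero_le_power)
qed

lemma idx_shift: assumes "b \<le> a"
  shows "idx a (t + of_int c / 2 ^ b) = idx a t + c * 2 ^ (a - b)"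
proof -
  have "(t + of_int c / 2 ^ b) * 2 ^ a = t * 2 ^ a + of_int (c * 2 ^ (a - b))"
  proof -
    have e: "(2::real) ^ a = 2 ^ b * 2 ^ (a - b)"
      using assms by (simp add: power_add[symmetric])
    show ?thesis by (simp add: e field_simps)
  qed
  then show ?thesis unfolding idx_def by (metis floor_add_int)
qed

lemma idx_of: "idx a (of_int e / 2 ^ a) = e"
  unfolding idx_def by simp

lemma dint_subset:
  "dint a j \<subseteq> dint b m \<longleftrightarrow> b \<le> a \<and> (int j - 1) div 2 ^ (a - b) = int m - 1"
proof
  assume H: "dint a j \<subseteq> dint b m"
  define t0 where "t0 = real_of_int (int j - 1) / 2 ^ a"
  have t0: "idx a t0 = int j - 1" unfolding t0_def by (rule idx_of)
  hence "t0 \<in> dint b m" using H mem_dint by blast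
  hence t0b: "idx b t0 = int m - 1" using mem_dint by blast
  show "b \<le> a \<and> (int j - 1) div 2 ^ (a - b) = int m - 1"
  proof (cases "b \<le> a")
    case True
    then have "idx b t0 = idx a t0 div 2 ^ (a - b)" by (rule idx_div)
    then show ?thesis using t0 t0b True by simp
  next
    case False
    define t1 where "t1 = t0 + real_of_int (2 ^ (b - a) - 1) / 2 ^ b"
    have "idx b t1 = idx b t0 + (2 ^ (b - a) - 1)"
      unfolding t1_def using idx_shift[of b b t0 "2 ^ (b - a) - 1"] by simp
    moreover have "idx a t1 = idx b t1 div 2 ^ (b - a)" using False by (intro idx_div) simp
    moreover have "idx b t0 = idx a t0 * 2 ^ (b - a)"
    proof -
      have "t0 * 2 ^ b = real_of_int ((int j - 1) * 2 ^ (b - a))"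
      proof -
        have e: "(2::real) ^ b = 2 ^ a * 2 ^ (b - a)"
          using False by (simp add: power_add[symmetric])
        show ?thesis unfolding t0_def by (simp add: e)
      qed
      then have "idx b t0 = (int j - 1) * 2 ^ (b - a)" unfolding idx_def
        by (rule ssubst) (rule floor_of_int)
      then show ?thesis using t0 by simp
    qed
    ultimately have "idx a t1 = (idx a t0 * 2 ^ (b - a) + (2 ^ (b - a) - 1)) div 2 ^ (b - a)"
      by (simp only:)
    also have "\<dots> = idx a t0"
    proof -
      have "(2 ^ (b - a) - 1) div 2 ^ (b - a) = (0::int)" by (simp add: div_pos_pos_trivial)
      then show ?thesis by simp
    qed
    finally have "idx a t1 = idx a t0" .
    hence "t1 \<in> dint a j" using mem_dint[of t1 a j] t0 by simp
    hence "t1 \<in> dint b m" using H by blast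
    hence "idx b t1 = int m - 1" using mem_dint[of t1 b m] by simp
    with t0b \<open>idx b t1 = idx b t0 + (2 ^ (b - a) - 1)\<close> have "(2::int) ^ (b - a) = 1" by simp
    moreover have "(1::int) < 2 ^ (b - a)" using False by (intro one_less_power) auto
    ultimately show ?thesis by simp
  qed
next
  assume H: "b \<le> a \<and> (int j - 1) div 2 ^ (a - b) = int m - 1"
  show "dint a j \<subseteq> dint b m"
  proof
    fix t assume "t \<in> dint a j"
    hence "idx a t = int j - 1" using mem_dint by blast
    moreover have "idx b t = idx a t div 2 ^ (a - b)" using H by (intro idx_div) simp
    ultimately have "idx b t = int m - 1" using H by simp
    thus "t \<in> dint b m" using mem_dint by blast
  qed
qed

definition phi :: "nat \<Rightarrow> nat \<Rightarrow> real \<Rightarrow> real" where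
  "phi h i t = (if idx (Suc h) t = 4 * int i - 3 then t + 1 / 2 ^ Suc h
     else if idx (Suc h) t = 4 * int i - 2 then t - 1 / 2 ^ Suc h else t)"

lemma idx_up: "b \<le> a \<Longrightarrow> idx a (t + 1 / 2 ^ b) = idx a t + 2 ^ (a - b)"
  using idx_shift[of b a t 1] by simp

lemma idx_dn: "b \<le> a \<Longrightarrow> idx a (t - 1 / 2 ^ b) = idx a t - 2 ^ (a - b)"
  using idx_shift[of b a t "-1"] by simp

lemma idx_phi_G: "idx (Suc h) (phi h i t) =
  (if idx (Suc h) t = 4 * int i - 3 then 4 * int i - 2
   else if idx (Suc h) t = 4 * int i - 2 then 4 * int i - 3 else idx (Suc h) t)"
  unfolding phi_def using idx_up[of "Suc h" "Suc h" t] idx_dn[of "Suc h" "Suc h" t] by auto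

lemma phi_phi: "phi h i (phi h i t) = t"
proof -
  have G: "idx (Suc h) (phi h i t) = (if idx (Suc h) t = 4 * int i - 3 then 4 * int i - 2
   else if idx (Suc h) t = 4 * int i - 2 then 4 * int i - 3 else idx (Suc h) t)"
    by (rule idx_phi_G)
  show ?thesis
  proof (cases "idx (Suc h) t = 4 * int i - 3")
    case True
    then show ?thesis using G by (simp add: phi_def)
  next
    case F1: False
    show ?thesis
    proof (cases "idx (Suc h) t = 4 * int i - 2")
      case True
      then show ?thesis using G F1 by (simp add: phi_def)
    next
      case False
      then show ?thesis using G F1 by (simp add: phi_def)
    qed
  qed
qed

lemma div_aux: assumes "2 \<le> c" shows "(4 * int i - 3) div 2 ^ c = (4 * int i - 2) div 2 ^ c"
proof -
  have c: "(2::int) ^ c = 4 * 2 ^ (c - 2)" using assms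
    by (metis le_add_diff_inverse power_add power2_eq_square numeral_Bit0 mult_2 numeral_times_numeral semiring_norm(12) power_numeral)
  have "(4 * int i - 3) div 4 = (4 * int i - 2) div 4" by presburger
  then show ?thesis unfolding c by (simp add: zdiv_zmult2_eq)
qed

lemma idx_phi_low: assumes "a + 2 \<le> Suc h"
  shows "idx a (phi h i t) = idx a t"
proof -
  have D: "\<And>x. idx a x = idx (Suc h) x div 2 ^ (Suc h - a)" using assms by (intro idx_div) simp
  have E: "(4 * int i - 3) div 2 ^ (Suc h - a) = (4 * int i - 2) div 2 ^ (Suc h - a)"
    using assms by (intro div_aux) simp
  show ?thesis unfolding D idx_phi_G using E by auto
qed

lemma idx_up_div: assumes "b \<le> a" "idx a t = x" shows "idx b t = x div 2 ^ (a - b)"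
  using idx_div[OF assms(1), of t] assms(2) by simp

lemma jstar_M:
  assumes h: "1 \<le> h" and i: "1 \<le> i"
    and nf: "\<not> (a = h \<and> (j = 2 * i - 1 \<or> j = 2 * i))"
  shows "t \<in> dint a (jstar h i (Suc a) j) \<longleftrightarrow> phi h i t \<in> dint a j"
proof -
  define d where "d = a - Suc h"
  define e where "e = int j - 1"
  have dd: "Suc a - h - 2 = d" unfolding d_def by simp
  have SA: "dint a j \<subseteq> dint (h + 1) (4 * i - 2) \<longleftrightarrow> Suc h \<le> a \<and> e div 2 ^ d = 4 * int i - 3"
    unfolding dint_subset e_def d_def using i by (simp add: of_nat_diff)
  have SB: "dint a j \<subseteq> dint (h + 1) (4 * i - 1) \<longleftrightarrow> Suc h \<le> a \<and> e div 2 ^ d = 4 * int i - 2"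
    unfolding dint_subset e_def d_def using i by (simp add: of_nat_diff)
  have pd: "(0::int) < 2 ^ d" by simp
  show ?thesis
  proof (cases "Suc h \<le> a \<and> e div 2 ^ d = 4 * int i - 3")
    case A: True
    have js: "jstar h i (Suc a) j = j + 2 ^ d" unfolding jstar_def dd using SA A by simp
    have L: "t \<in> dint a (jstar h i (Suc a) j) \<longleftrightarrow> idx a t = e + 2 ^ d"
      unfolding js mem_dint e_def by (simp add: algebra_simps)
    have R: "phi h i t \<in> dint a j \<longleftrightarrow> idx a (phi h i t) = e"
      unfolding mem_dint e_def by simp
    have Dv: "\<And>x y. idx a x = y \<Longrightarrow> idx (Suc h) x = y div 2 ^ d"
      unfolding d_def using A by (intro idx_up_div) auto
    have e1: "(e + 2 ^ d) div 2 ^ d = 4 * int i - 2" using A pd by simp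
    have e2: "(e - 2 ^ d) div 2 ^ d = 4 * int i - 4"
    proof -
      have "e = (e - 2 ^ d) + 2 ^ d" by simp
      hence "e div 2 ^ d = (e - 2 ^ d) div 2 ^ d + 1" using pd by (metis div_add_self2 less_irrefl)
      thus ?thesis using A by simp
    qed
    show ?thesis unfolding L R
    proof (cases "idx (Suc h) t = 4 * int i - 3")
      case True
      have p: "phi h i t = t + 1 / 2 ^ Suc h" using True by (simp add: phi_def)
      have "idx a (phi h i t) = idx a t + 2 ^ d" unfolding p d_def using A by (intro idx_up) simp
      then show "(idx a t = e + 2 ^ d) = (idx a (phi h i t) = e)"
        using Dv[of t "e + 2 ^ d"] Dv[of t "e - 2 ^ d"] True e1 e2 by auto
    next
      case F1: False
      show "(idx a t = e + 2 ^ d) = (idx a (phi h i t) = e)"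
      proof (cases "idx (Suc h) t = 4 * int i - 2")
        case True
        have p: "phi h i t = t - 1 / 2 ^ Suc h" using True by (simp add: phi_def)
        have "idx a (phi h i t) = idx a t - 2 ^ d" unfolding p d_def using A by (intro idx_dn) simp
        then show ?thesis by auto
      next
        case False
        have p: "phi h i t = t" using False F1 by (simp add: phi_def)
        show ?thesis unfolding p using Dv[of t "e + 2 ^ d"] Dv[of t e] F1 False e1 A by auto
      qed
    qed
  next
    case nA: False
    show ?thesis
    proof (cases "Suc h \<le> a \<and> e div 2 ^ d = 4 * int i - 2")
      case B: True
      have ge: "2 ^ d \<le> j"
      proof -
        have m: "e = e div 2 ^ d * 2 ^ d + e mod 2 ^ d" by (rule div_mult_mod_eq[symmetric])
        have m0: "0 \<le> e mod 2 ^ d" using pd by simp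
        have "2 * 2 ^ d \<le> (4 * int i - 2) * (2 ^ d :: int)" using i pd by (intro mult_right_mono) auto
        moreover have "e = (4 * int i - 2) * 2 ^ d + e mod 2 ^ d" using m B by simp
        ultimately have "2 * 2 ^ d \<le> e" using m0 by linarith
        hence "(2::int) ^ d \<le> int j" unfolding e_def using pd by linarith
        thus ?thesis by (metis of_nat_le_iff of_nat_numeral of_nat_power)
      qed
      have js: "jstar h i (Suc a) j = j - 2 ^ d" unfolding jstar_def dd using SA SB B nA by auto
      have L: "t \<in> dint a (jstar h i (Suc a) j) \<longleftrightarrow> idx a t = e - 2 ^ d"
        unfolding js mem_dint e_def using ge by (simp add: of_nat_diff algebra_simps)
      have R: "phi h i t \<in> dint a j \<longleftrightarrow> idx a (phi h i t) = e"
        unfolding mem_dint e_def by simp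
      have Dv: "\<And>x y. idx a x = y \<Longrightarrow> idx (Suc h) x = y div 2 ^ d"
        unfolding d_def using B by (intro idx_up_div) auto
      have e1: "(e + 2 ^ d) div 2 ^ d = 4 * int i - 1" using B pd by simp
      have e2: "(e - 2 ^ d) div 2 ^ d = 4 * int i - 3"
      proof -
        have "e = (e - 2 ^ d) + 2 ^ d" by simp
        hence "e div 2 ^ d = (e - 2 ^ d) div 2 ^ d + 1" using pd by (metis div_add_self2 less_irrefl)
        thus ?thesis using B by simp
      qed
      show ?thesis unfolding L R
      proof (cases "idx (Suc h) t = 4 * int i - 3")
        case True
        have p: "phi h i t = t + 1 / 2 ^ Suc h" using True by (simp add: phi_def)
        have "idx a (phi h i t) = idx a t + 2 ^ d" unfolding p d_def using B by (intro idx_up) simp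
        then show "(idx a t = e - 2 ^ d) = (idx a (phi h i t) = e)" by auto
      next
        case F1: False
        show "(idx a t = e - 2 ^ d) = (idx a (phi h i t) = e)"
        proof (cases "idx (Suc h) t = 4 * int i - 2")
          case True
          have p: "phi h i t = t - 1 / 2 ^ Suc h" using True by (simp add: phi_def)
          have "idx a (phi h i t) = idx a t - 2 ^ d" unfolding p d_def using B by (intro idx_dn) simp
          then show ?thesis using Dv[of t "e - 2 ^ d"] Dv[of t "e + 2 ^ d"] True e1 e2 by auto
        next
          case False
          have p: "phi h i t = t" using False F1 by (simp add: phi_def)
          show ?thesis unfolding p using Dv[of t "e - 2 ^ d"] Dv[of t e] F1 False e2 B by auto
        qed
      qed
    next
      case nB: False
      have js: "jstar h i (Suc a) j = j" unfolding jstar_def using SA SB nA nB by auto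
      have key: "idx a s \<noteq> e" if G: "idx (Suc h) s = 4 * int i - 3 \<or> idx (Suc h) s = 4 * int i - 2"
        and nl: "\<not> a + 2 \<le> Suc h" for s
      proof
        assume E: "idx a s = e"
        show False
        proof (cases "Suc h \<le> a")
          case True
          then have "idx (Suc h) s = e div 2 ^ d" unfolding d_def using E by (intro idx_up_div)
          then show False using G nA nB True by auto
        next
          case False
          then have ah: "a = h" using nl by simp
          have "idx a s = idx (Suc h) s div 2 ^ (Suc h - a)" using ah by (intro idx_div) simp
          hence "idx h s = idx (Suc h) s div 2" using ah by simp
          hence "idx h s = 2 * int i - 2 \<or> idx h s = 2 * int i - 1" using G by auto
          hence "int j - 1 = 2 * int i - 2 \<or> int j - 1 = 2 * int i - 1" using E ah e_def by simp
          hence "j = 2 * i - 1 \<or> j = 2 * i" using i by auto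
          then show False using nf ah by simp
        qed
      qed
      show ?thesis unfolding js mem_dint e_def[symmetric]
      proof (cases "a + 2 \<le> Suc h")
        case True
        then show "(idx a t = e) = (idx a (phi h i t) = e)" using idx_phi_low by simp
      next
        case nl: False
        show "(idx a t = e) = (idx a (phi h i t) = e)"
        proof (cases "idx (Suc h) t = 4 * int i - 3 \<or> idx (Suc h) t = 4 * int i - 2")
          case True
          have "idx (Suc h) (phi h i t) = 4 * int i - 3 \<or> idx (Suc h) (phi h i t) = 4 * int i - 2"
            using True idx_phi_G[of h i t] by auto
          then show ?thesis using key[OF True nl] key[of "phi h i t"] nl by auto
        next
          case False
          then have "phi h i t = t" by (auto simp: phi_def)
          then show ?thesis by simp
        qed
      qed
    qed
  qed
qed

lemma div0_iff: "(x::int) div 2 ^ a = 0 \<longleftrightarrow> 0 \<le> x \<and> x < 2 ^ a"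
proof -
  have "(0::int) < 2 ^ a" by simp
  then show ?thesis using zdiv_eq_0_iff[of x "2 ^ a"] by (smt (verit))
qed

lemma nonfork_cond:
  assumes "(k, j) \<in> dtree - fork h i"
  shows "k = Suc (k - 1)" "\<not> (k - 1 = h \<and> (j = 2 * i - 1 \<or> j = 2 * i))"
  using assms by (auto simp: dtree_def fork_def)

lemma M':
  assumes h: "1 \<le> h" and i: "1 \<le> i" and x: "(k, j) \<in> dtree - fork h i"
  shows "t \<in> dint (k - 1) (jstar h i k j) \<longleftrightarrow> phi h i t \<in> dint (k - 1) j"
proof -
  have k: "k = Suc (k - 1)" and nf: "\<not> (k - 1 = h \<and> (j = 2 * i - 1 \<or> j = 2 * i))"
    using nonfork_cond[OF x] by auto
  have "t \<in> dint (k - 1) (jstar h i (Suc (k - 1)) j) \<longleftrightarrow> phi h i t \<in> dint (k - 1) j"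
    by (rule jstar_M[OF h i nf])
  then show ?thesis using k by simp
qed

lemma idx_unit: "0 \<le> t \<and> t < 1 \<longleftrightarrow> idx 0 t = 0"
  unfolding idx_def by (simp add: floor_eq_iff)

lemma phi_unit:
  assumes h: "1 \<le> h" shows "0 \<le> phi h i t \<and> phi h i t < 1 \<longleftrightarrow> 0 \<le> t \<and> t < 1"
  unfolding idx_unit using idx_phi_low[of 0 h i t] h by simp

lemma g_dtree:
  assumes h: "1 \<le> h" and i: "1 \<le> i" and x: "(k, j) \<in> dtree - fork h i"
  shows "(k, jstar h i k j) \<in> dtree"
proof -
  define a where "a = k - 1"
  define J where "J = jstar h i k j"
  have k: "k = Suc a" using nonfork_cond[OF x] a_def by auto
  have jr: "0 \<le> int j - 1 \<and> int j - 1 < 2 ^ a"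
  proof -
    have "1 \<le> j" "j \<le> 2 ^ a" using x k by (auto simp: dtree_def)
    then have "int j \<le> 2 ^ a" by (metis of_nat_le_iff of_nat_numeral of_nat_power)
    with \<open>1 \<le> j\<close> show ?thesis by linarith
  qed
  define s where "s = real_of_int (int J - 1) / 2 ^ a"
  have s1: "idx a s = int J - 1" unfolding s_def by (rule idx_of)
  hence "s \<in> dint a J" using mem_dint by simp
  hence "phi h i s \<in> dint a j" using M'[OF h i x, of s] unfolding a_def J_def by simp
  hence "idx a (phi h i s) = int j - 1" using mem_dint by simp
  moreover have "idx 0 (phi h i s) = idx a (phi h i s) div 2 ^ a" using idx_div[of 0 a] by simp
  ultimately have "idx 0 (phi h i s) = 0" using jr div0_iff by simp
  hence "idx 0 s = 0" using idx_phi_low[of 0 h i s] h by simp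
  moreover have "idx 0 s = idx a s div 2 ^ a" using idx_div[of 0 a] by simp
  ultimately have "0 \<le> int J - 1 \<and> int J - 1 < 2 ^ a" using s1 div0_iff by simp
  hence J1: "1 \<le> J" and J2: "int J \<le> 2 ^ a" by linarith+
  from J2 have "J \<le> 2 ^ a" by (metis of_nat_le_iff of_nat_numeral of_nat_power)
  note J1 this
  then show ?thesis unfolding J_def dtree_def using k by simp
qed

lemma g_inj:
  assumes h: "1 \<le> h" and i: "1 \<le> i"
  shows "inj_on (\<lambda>(k, j). (k, jstar h i k j)) (dtree - fork h i)"
proof (rule inj_onI)
  fix p q
  assume p: "p \<in> dtree - fork h i" and q: "q \<in> dtree - fork h i"
    and pq: "(\<lambda>(k, j). (k, jstar h i k j)) p = (\<lambda>(k, j). (k, jstar h i k j)) q"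
  obtain k j1 where pe: "p = (k, j1)" by (cases p)
  obtain k2 j2 where qe: "q = (k2, j2)" by (cases q)
  have x1: "(k, j1) \<in> dtree - fork h i" using p pe by simp
  have x2: "(k2, j2) \<in> dtree - fork h i" using q qe by simp
  have eq: "(k, jstar h i k j1) = (k2, jstar h i k2 j2)" using pq unfolding pe qe by (simp only: case_prod_conv)
  then have k2: "k2 = k" by simp
  have jj: "jstar h i k j1 = jstar h i k j2" using eq k2 by simp
  have x2': "(k, j2) \<in> dtree - fork h i" using x2 k2 by simp
  define s where "s = real_of_int (int j1 - 1) / 2 ^ (k - 1)"
  have "idx (k - 1) s = int j1 - 1" unfolding s_def by (rule idx_of)
  hence "phi h i (phi h i s) \<in> dint (k - 1) j1" using mem_dint phi_phi by simp
  hence "phi h i s \<in> dint (k - 1) (jstar h i k j1)" using M'[OF h i x1] by simp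
  hence "phi h i s \<in> dint (k - 1) (jstar h i k j2)" using jj by simp
  hence "phi h i (phi h i s) \<in> dint (k - 1) j2" using M'[OF h i x2'] by simp
  hence "idx (k - 1) s = int j2 - 1" using mem_dint phi_phi by simp
  with \<open>idx (k - 1) s = int j1 - 1\<close> have "j1 = j2" by simp
  then show "p = q" using pe qe k2 by simp
qed

lemma g_branch:
  assumes h: "1 \<le> h" and i: "1 \<le> i" and x: "(k, j) \<in> dtree - fork h i"
  shows "(k, jstar h i k j) \<in> branch t \<longleftrightarrow> (k, j) \<in> branch (phi h i t)"
  using g_dtree[OF h i x] M'[OF h i x, of t] x unfolding branch_def by auto

lemma g_notC:
  assumes x: "(k, j) \<in> dtree - fork h i"
  shows "(k, jstar h i k j) \<notin> {(h + 1, 2 * i - 1), (h + 1, 2 * i)}"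
proof
  assume a: "(k, jstar h i k j) \<in> {(h + 1, 2 * i - 1), (h + 1, 2 * i)}"
  then have k: "k = h + 1" by auto
  have "\<not> dint (k - 1) j \<subseteq> dint (h + 1) m" for m unfolding dint_subset using k by simp
  then have "jstar h i k j = j" unfolding jstar_def by simp
  then show False using a x by (auto simp: fork_def)
qed

lemma C_card:
  assumes h: "1 \<le> h" and i: "1 \<le> i" and ih: "i \<le> 2 ^ (h - 1)"
  shows "card ({(h + 1, 2 * i - 1), (h + 1, 2 * i)} \<inter> branch t) =
         (if idx (h - 1) t = int i - 1 then 1 else 0)"
proof -
  have hh: "(2::nat) ^ h = 2 * 2 ^ (h - 1)" using h by (metis Suc_diff_1 less_le_trans zero_less_one power_Suc)
  have d1: "(h + 1, 2 * i - 1) \<in> dtree" "(h + 1, 2 * i) \<in> dtree"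
    using i ih hh by (auto simp: dtree_def)
  have m1: "(h + 1, 2 * i - 1) \<in> branch t \<longleftrightarrow> idx h t = 2 * int i - 2"
    using d1 i unfolding branch_def by (simp add: mem_dint of_nat_diff)
  have m2: "(h + 1, 2 * i) \<in> branch t \<longleftrightarrow> idx h t = 2 * int i - 1"
    using d1 i unfolding branch_def by (simp add: mem_dint)
  have dv: "idx (h - 1) t = idx h t div 2" using idx_div[of "h - 1" h t] h by simp
  have ne: "(h + 1, 2 * i - 1) \<noteq> (h + 1, 2 * i)" using i by simp
  show ?thesis
  proof (cases "idx h t = 2 * int i - 2")
    case True
    then have "{(h + 1, 2 * i - 1), (h + 1, 2 * i)} \<inter> branch t = {(h + 1, 2 * i - 1)}"
      using m1 m2 by auto
    moreover have "idx (h - 1) t = int i - 1" using dv True by simp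
    ultimately show ?thesis by simp
  next
    case F1: False
    show ?thesis
    proof (cases "idx h t = 2 * int i - 1")
      case True
      then have "{(h + 1, 2 * i - 1), (h + 1, 2 * i)} \<inter> branch t = {(h + 1, 2 * i)}"
        using m1 m2 by auto
      moreover have "idx (h - 1) t = int i - 1" using dv True by simp
      ultimately show ?thesis by simp
    next
      case False
      then have "{(h + 1, 2 * i - 1), (h + 1, 2 * i)} \<inter> branch t = {}"
        using m1 m2 F1 by auto
      moreover have "idx (h - 1) t \<noteq> int i - 1" using dv False F1 by auto
      ultimately show ?thesis by simp
    qed
  qed
qed

theorem lemma3p6:
  fixes F :: "(nat \<times> nat) set" and h i :: nat
  assumes "F \<subseteq> dtree" and "finite F" and "admissible F h i"
  shows "card (Phi h i F) = card F + 1 \<and> lh (Phi h i F) = lh F"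
proof -
  note FD = assms(1) and fin = assms(2)
  have hiF: "(h, i) \<in> F" and n1: "(h + 1, 2 * i - 1) \<notin> F" and n2: "(h + 1, 2 * i) \<notin> F"
    using assms(3) by (auto simp: admissible_def)
  have "(h, i) \<in> dtree" using hiF FD by auto
  then have h: "1 \<le> h" and i: "1 \<le> i" and ih: "i \<le> 2 ^ (h - 1)" by (auto simp: dtree_def)
  define C where "C = {(h + 1, 2 * i - 1), (h + 1, 2 * i)}"
  define g where "g = (\<lambda>(k, j). (k, jstar h i k j))"
  define R where "R = F - fork h i"
  have PhiE: "Phi h i F = C \<union> g ` R"
    unfolding Phi_def C_def g_def R_def by (auto simp: image_iff)
  have RD: "R \<subseteq> dtree - fork h i" using FD unfolding R_def by auto
  have finR: "finite R" using fin unfolding R_def by simp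
  have inj: "inj_on g R" using g_inj[OF h i] RD unfolding g_def by (rule inj_on_subset)
  have disj: "C \<inter> g ` R = {}"
  proof -
    have "g x \<notin> C" if "x \<in> R" for x
      using g_notC[of "fst x" "snd x" h i] RD that unfolding g_def C_def
      by (cases x) auto
    then show ?thesis by auto
  qed
  have FE: "F = insert (h, i) R" and hiR: "(h, i) \<notin> R"
    using hiF n1 n2 unfolding R_def fork_def by auto
  have cC: "card C = 2" unfolding C_def using i by simp
  have c1: "card (Phi h i F) = card F + 1"
  proof -
    have "card (Phi h i F) = card C + card (g ` R)"
      unfolding PhiE using disj finR by (intro card_Un_disjoint) (auto simp: C_def)
    also have "card (g ` R) = card R" using inj by (rule card_image)
    also have "card F = Suc (card R)" using FE hiR finR by simp
    ultimately show ?thesis using cC by simp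
  qed
  have br: "card (Phi h i F \<inter> branch t) = card (F \<inter> branch (phi h i t))" for t
  proof -
    have gb: "g ` R \<inter> branch t = g ` (R \<inter> branch (phi h i t))"
    proof -
      have "g x \<in> branch t \<longleftrightarrow> x \<in> branch (phi h i t)" if "x \<in> R" for x
        using g_branch[OF h i, of "fst x" "snd x" t] RD that unfolding g_def
        by (cases x) auto
      then show ?thesis by auto
    qed
    have "card (Phi h i F \<inter> branch t) = card (C \<inter> branch t) + card (g ` R \<inter> branch t)"
    proof -
      have "Phi h i F \<inter> branch t = (C \<inter> branch t) \<union> (g ` R \<inter> branch t)"
        unfolding PhiE by auto
      moreover have "(C \<inter> branch t) \<inter> (g ` R \<inter> branch t) = {}" using disj by auto
      ultimately show ?thesis using finR by (simp add: card_Un_disjoint C_def)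
    qed
    also have "card (g ` R \<inter> branch t) = card (R \<inter> branch (phi h i t))"
      unfolding gb using inj by (intro card_image) (rule inj_on_subset, auto)
    also have "card (C \<inter> branch t) = (if (h, i) \<in> branch (phi h i t) then 1 else 0)"
    proof -
      have "(h, i) \<in> branch (phi h i t) \<longleftrightarrow> idx (h - 1) (phi h i t) = int i - 1"
        using \<open>(h, i) \<in> dtree\<close> unfolding branch_def by (simp add: mem_dint)
      also have "idx (h - 1) (phi h i t) = idx (h - 1) t" using h by (intro idx_phi_low) simp
      finally show ?thesis unfolding C_def using C_card[OF h i ih, of t] by simp
    qed
    also have "card (F \<inter> branch (phi h i t)) =
      (if (h, i) \<in> branch (phi h i t) then 1 else 0) + card (R \<inter> branch (phi h i t))"
    proof -
      have "F \<inter> branch (phi h i t) = ({(h, i)} \<inter> branch (phi h i t)) \<union> (R \<inter> branch (phi h i t))"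
        using FE by auto
      moreover have "({(h, i)} \<inter> branch (phi h i t)) \<inter> (R \<inter> branch (phi h i t)) = {}" using hiR by auto
      ultimately have "card (F \<inter> branch (phi h i t)) =
          card ({(h, i)} \<inter> branch (phi h i t)) + card (R \<inter> branch (phi h i t))"
        using finR by (simp add: card_Un_disjoint)
      then show ?thesis by (cases "(h, i) \<in> branch (phi h i t)") auto
    qed
    ultimately show ?thesis by simp
  qed
  have pu: "phi h i t \<in> {0..<1} \<longleftrightarrow> t \<in> {0..<1}" for t using phi_unit[OF h] by simp
  have imgs: "(\<lambda>t. card (Phi h i F \<inter> branch t)) ` {0..<1} = (\<lambda>t. card (F \<inter> branch t)) ` {0..<1}"
  proof
    show "(\<lambda>t. card (Phi h i F \<inter> branch t)) ` {0..<1} \<subseteq> (\<lambda>t. card (F \<inter> branch t)) ` {0..<1}"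
    proof
      fix y assume "y \<in> (\<lambda>t. card (Phi h i F \<inter> branch t)) ` {0..<1}"
      then obtain t where t: "t \<in> {0..<1}" and y: "y = card (Phi h i F \<inter> branch t)" by auto
      have "y = card (F \<inter> branch (phi h i t))" using y br by simp
      moreover have "phi h i t \<in> {0..<1}" using pu t by simp
      ultimately show "y \<in> (\<lambda>t. card (F \<inter> branch t)) ` {0..<1}" by blast
    qed
  next
    show "(\<lambda>t. card (F \<inter> branch t)) ` {0..<1} \<subseteq> (\<lambda>t. card (Phi h i F \<inter> branch t)) ` {0..<1}"
    proof
      fix y assume "y \<in> (\<lambda>t. card (F \<inter> branch t)) ` {0..<1}"
      then obtain t where t: "t \<in> {0..<1}" and y: "y = card (F \<inter> branch t)" by auto
      have "y = card (Phi h i F \<inter> branch (phi h i t))" using y br[of "phi h i t"] phi_phi by simp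
      moreover have "phi h i t \<in> {0..<1}" using pu t by simp
      ultimately show "y \<in> (\<lambda>t. card (Phi h i F \<inter> branch t)) ` {0..<1}" by blast
    qed
  qed
  have "lh (Phi h i F) = lh F" unfolding lh_def imgs ..
  with c1 show ?thesis by simp
qed

end
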